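(* Let $H_0,H_1$ be complex Hilbert spaces, $G$ a densely defined closed operator from $H_0$ into $H_1$ and $D$ a densely defined closed operator from $H_1$ into $H_0$ with $-G^*\subset D$. Let $a\in\mathcal L(H_1)$ and $m\in\mathcal L(H_0)$ be coercive and let $q_0\in\mathrm{BD}(D)$. Then there exists a unique $u\in\mathrm{dom}(DaG)$ such that $mu-DaGu=0$ and $aGu-q_0\in\mathrm{dom}(\mathring D)$.
   Context: $\mathring D=-G^*$, $\mathring G=-D^*$. Domains carry graph inner products, e.g. $(q,r)_{\mathrm{dom}(D)}=(q,r)_{H_1}+(Dq,Dr)_{H_0}$. $\mathrm{BD}(D)$ is the orthogonal complement of $\mathrm{dom}(\mathring D)$ in $\mathrm{dom}(D)$. $\mathrm{dom}(DaG)=\{u\in\mathrm{dom}(G):aGu\in\mathrm{dom}(D)\}$. Coercive: $\mathrm{Re}(Mx,x)\ge\mu\|x\|^2$ for some $\mu>0$. *)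

theory Defs
  imports "HOL-Analysis.Analysis"
begin

text \<open>A complex Hilbert space is modelled as a real Hilbert space (type class
  real_inner + complete_space) together with a complex structure J
  (multiplication by the imaginary unit), which is real-linear, satisfies
  J (J x) = - x and is orthogonal.\<close>

definition complex_structure :: "('a::real_inner \<Rightarrow> 'a) \<Rightarrow> bool" where
  "complex_structure J \<longleftrightarrow> linear J \<and> (\<forall>x. J (J x) = - x) \<and> (\<forall>x y. inner (J x) (J y) = inner x y)"

definition cscale :: "('a::real_vector \<Rightarrow> 'a) \<Rightarrow> complex \<Rightarrow> 'a \<Rightarrow> 'a" where
  "cscale J c x = Re c *\<^sub>R x + Im c *\<^sub>R J x"

text \<open>Complex inner product (linear in the first, conjugate-linear in the second
  argument); its real part is the real inner product, so the norms agree.\<close>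
definition cinner :: "('a::real_inner \<Rightarrow> 'a) \<Rightarrow> 'a \<Rightarrow> 'a \<Rightarrow> complex" where
  "cinner J x y = Complex (inner x y) (inner x (J y))"

text \<open>(Possibly unbounded) operators are represented by their graphs.
  A complex-linear operator from H (structure J) to K (structure K'):
  the graph is a complex linear subspace and is single-valued.\<close>
definition lin_op :: "('a::real_vector \<Rightarrow> 'a) \<Rightarrow> ('b::real_vector \<Rightarrow> 'b) \<Rightarrow> ('a \<times> 'b) set \<Rightarrow> bool" where
  "lin_op J K T \<longleftrightarrow> subspace T \<and> (\<forall>(x,y)\<in>T. (J x, K y) \<in> T) \<and> (\<forall>y. (0, y) \<in> T \<longrightarrow> y = 0)"

definition op_app :: "('a \<times> 'b) set \<Rightarrow> 'a \<Rightarrow> 'b" where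
  "op_app T x = (THE y. (x, y) \<in> T)"

definition densely_defined :: "('a::topological_space \<times> 'b) set \<Rightarrow> bool" where
  "densely_defined T \<longleftrightarrow> closure (Domain T) = UNIV"

definition closed_op :: "('a::topological_space \<times> 'b::topological_space) set \<Rightarrow> bool" where
  "closed_op T \<longleftrightarrow> closed T"

definition adjoint :: "('a::real_inner \<Rightarrow> 'a) \<Rightarrow> ('b::real_inner \<Rightarrow> 'b) \<Rightarrow> ('a \<times> 'b) set \<Rightarrow> ('b \<times> 'a) set" where
  "adjoint J K T = {(y, z). \<forall>(x, w)\<in>T. cinner K w y = cinner J x z}"

definition neg_op :: "('a \<times> 'b::uminus) set \<Rightarrow> ('a \<times> 'b) set" where
  "neg_op T = {(x, - y) | x y. (x, y) \<in> T}"

definition cbounded :: "('a::real_normed_vector \<Rightarrow> 'a) \<Rightarrow> ('a \<Rightarrow> 'a) \<Rightarrow> bool" where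
  "cbounded J M \<longleftrightarrow> bounded_linear M \<and> (\<forall>x. M (J x) = J (M x))"

definition coercive :: "('a::real_inner \<Rightarrow> 'a) \<Rightarrow> ('a \<Rightarrow> 'a) \<Rightarrow> bool" where
  "coercive J M \<longleftrightarrow> (\<exists>\<mu>>0. \<forall>x. Re (cinner J (M x) x) \<ge> \<mu> * (norm x)\<^sup>2)"

text \<open>BD(D): orthogonal complement of dom(Dc) in dom(D) w.r.t. the graph inner
  product of dom(D); here D : H1 \<rightarrow> H0, Dc is the operator with D-ring (Dc \<subseteq> D).\<close>
definition BD :: "('a::real_inner \<Rightarrow> 'a) \<Rightarrow> ('b::real_inner \<Rightarrow> 'b) \<Rightarrow> ('b \<times> 'a) set \<Rightarrow> ('b \<times> 'a) set \<Rightarrow> 'b set" where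
  "BD J0 J1 D Dc = {q \<in> Domain D. \<forall>r \<in> Domain Dc.
      cinner J1 q r + cinner J0 (op_app D q) (op_app D r) = 0}"

end

theory Submission
  imports Defs
begin

lemma parallelo:
  fixes a b :: "'h::real_inner"
  shows "norm (a - b)^2 = 2*norm a^2 + 2*norm b^2 - 4 * norm ((1/2) *\<^sub>R (a+b))^2"
  by (simp add: power2_norm_eq_inner inner_diff inner_add inner_commute algebra_simps)

lemma proj_exists:
  fixes X :: "'h::{real_inner,complete_space} set"
  assumes sX: "subspace X" and cX: "closed X"
  shows "\<exists>p\<in>X. \<forall>v\<in>X. inner (h - p) v = 0"
proof -
  define dd where "dd q = norm (h - q)^2" for q
  define d where "d = Inf (dd ` X)"
  have X0: "0 \<in> X" using sX by (simp add: subspace_0)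
  have ne: "dd ` X \<noteq> {}" using X0 by auto
  have bdd: "bdd_below (dd ` X)" unfolding dd_def by (rule bdd_belowI[of _ 0]) auto
  have dle: "d \<le> dd q" if "q \<in> X" for q unfolding d_def using bdd that by (simp add: cInf_lower)
  have "\<exists>q\<in>X. dd q < d + inverse (real (Suc n))" for n
  proof -
    have "Inf (dd ` X) < d + inverse (real (Suc n))" unfolding d_def by simp
    hence "\<exists>y\<in>dd ` X. y < d + inverse (real (Suc n))" by (subst (asm) cInf_less_iff[OF ne bdd])
    then show ?thesis by blast
  qed
  then obtain p where pX: "\<And>n. p n \<in> X" and pd: "\<And>n. dd (p n) < d + inverse (real (Suc n))"
    by metis
  have midX: "(1/2) *\<^sub>R (p n + p k) \<in> X" for n k
    using sX pX by (simp add: subspace_add subspace_scale)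
  have key: "norm (p n - p k)^2 \<le> 2 * inverse (real (Suc n)) + 2 * inverse (real (Suc k))" for n k
  proof -
    have "h - (1/2) *\<^sub>R (p n + p k) = (1/2) *\<^sub>R ((h - p n) + (h - p k))"
      by (simp add: algebra_simps scaleR_2[symmetric] del: scaleR_2)
    hence m: "d \<le> norm ((1/2) *\<^sub>R ((h - p n) + (h - p k)))^2"
      using dle[OF midX[of n k]] unfolding dd_def by simp
    have "p n - p k = (h - p k) - (h - p n)" by simp
    hence "norm (p n - p k)^2 = 2*dd (p k) + 2 * dd (p n) - 4 * norm ((1/2) *\<^sub>R ((h - p k) + (h - p n)))^2"
      unfolding dd_def using parallelo by metis
    also have "(h - p k) + (h - p n) = (h - p n) + (h - p k)" by simp
    finally show ?thesis using m pd[of n] pd[of k] by linarith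
  qed
  have "Cauchy p"
  proof (rule CauchyI)
    fix e :: real assume e: "0 < e"
    obtain N :: nat where N: "4 / e^2 < real N" using reals_Archimedean2 by blast
    have "norm (p m - p n) < e" if "m \<ge> N" "n \<ge> N" for m n
    proof -
      have e2: "0 < e^2" using e by simp
      have iv: "inverse (real (Suc j)) < e^2 / 4" if "j \<ge> N" for j
      proof -
        have "4 / e^2 < real (Suc j)" using N that by simp
        hence "4 < real (Suc j) * e^2" using e2 by (simp add: field_simps)
        thus ?thesis using e2 by (simp add: field_simps)
      qed
      have "norm (p m - p n)^2 < e^2" using key[of m n] iv[OF that(1)] iv[OF that(2)] by linarith
      thus ?thesis using e by (simp add: power_less_imp_less_base)
    qed
    thus "\<exists>M. \<forall>m\<ge>M. \<forall>n\<ge>M. norm (p m - p n) < e" by blast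
  qed
  then obtain q where lim: "p \<longlonglongrightarrow> q" by (auto simp: convergent_eq_Cauchy[symmetric])
  have qX: "q \<in> X" using closed_sequentially[OF cX pX lim] .
  have "(\<lambda>n. dd (p n)) \<longlonglongrightarrow> dd q" unfolding dd_def
    by (intro tendsto_intros lim)
  moreover have "(\<lambda>n. d + inverse (real (Suc n))) \<longlonglongrightarrow> d + 0"
    by (intro tendsto_intros LIMSEQ_inverse_real_of_nat)
  ultimately have "dd q \<le> d + 0" by (rule LIMSEQ_le) (use pd less_imp_le in blast)
  hence qmin: "dd q \<le> dd x" if "x \<in> X" for x using dle[OF that] by simp
  have "inner (h - q) v = 0" if vX: "v \<in> X" for v
  proof (cases "v = 0")
    case True thus ?thesis by simp
  next
    case False
    define c where "c = inner (h - q) v"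
    define t where "t = c / inner v v"
    have vv: "inner v v > 0" using False by simp
    have "q + t *\<^sub>R v \<in> X" using sX qX vX by (simp add: subspace_add subspace_scale)
    hence "dd q \<le> dd (q + t *\<^sub>R v)" by (rule qmin)
    hence "inner (h - q) (h - q) \<le> inner ((h - q) - t *\<^sub>R v) ((h - q) - t *\<^sub>R v)"
      unfolding dd_def by (simp add: power2_norm_eq_inner algebra_simps)
    hence "0 \<le> t * t * inner v v - 2 * t * c"
      unfolding c_def by (simp add: inner_diff inner_commute algebra_simps)
    also have "t * t * inner v v - 2 * t * c = - (c * c / inner v v)"
      unfolding t_def using vv by (simp add: field_simps power2_eq_square)
    finally have "c * c / inner v v \<le> 0" by simp
    hence "c * c \<le> 0" using vv by (simp add: divide_le_0_iff)
    hence "c = 0" by (metis antisym zero_le_square mult_eq_0_iff)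
    thus ?thesis unfolding c_def .
  qed
  thus ?thesis using qX by blast
qed

lemma lax_milgram:
  fixes X :: "'h::{real_inner,complete_space} set" and K :: "'h \<Rightarrow> 'h"
  assumes sX: "subspace X" and cX: "closed X"
    and Klin: "\<And>x y. K (x - y) = K x - K y"
    and Kb: "\<And>x. norm (K x) \<le> M * norm x"
    and Kc: "\<And>x. x \<in> X \<Longrightarrow> inner (K x) x \<ge> \<mu> * norm x ^ 2" and mu: "\<mu> > 0"
  shows "\<exists>u\<in>X. \<forall>v\<in>X. inner (K u - F) v = 0"
proof -
  define P where "P h = (SOME p. p \<in> X \<and> (\<forall>v\<in>X. inner (h - p) v = 0))" for h
  have P: "P h \<in> X \<and> (\<forall>v\<in>X. inner (h - P h) v = 0)" for h
  proof -
    have ex: "\<exists>p. p \<in> X \<and> (\<forall>v\<in>X. inner (h - p) v = 0)" using proj_exists[OF sX cX, of h] by blast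
    show ?thesis unfolding P_def by (rule someI_ex[OF ex])
  qed
  have Plin: "P x - P y = P (x - y)" for x y
  proof -
    define r where "r = P x - P y - P (x - y)"
    have rX: "r \<in> X" unfolding r_def using P sX by (simp add: subspace_diff)
    have "inner r r = inner ((x - y) - P (x - y)) r - inner (x - P x) r + inner (y - P y) r"
      unfolding r_def by (simp add: inner_diff_left algebra_simps)
    also have "\<dots> = 0" using P rX by simp
    finally show ?thesis unfolding r_def by simp
  qed
  have Pn: "norm (P h) \<le> norm h" for h
  proof -
    have "inner (h - P h) (P h) = 0" using P by blast
    hence "norm (P h)^2 = inner h (P h)" by (simp add: power2_norm_eq_inner inner_diff_left)
    also have "\<dots> \<le> norm h * norm (P h)" by (rule norm_cauchy_schwarz)
    finally have "norm (P h) * norm (P h) \<le> norm h * norm (P h)" by (simp add: power2_eq_square)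
    thus ?thesis by (cases "norm (P h) = 0") auto
  qed
  define M' where "M' = max M \<mu>"
  have M'pos: "M' > 0" using mu unfolding M'_def by simp
  have Kb': "norm (K x) \<le> M' * norm x" for x
    using Kb[of x] mult_right_mono[of M M' "norm x"] unfolding M'_def by force
  define \<rho> where "\<rho> = \<mu> / M'^2"
  define k where "k = 1 - \<mu>^2 / M'^2"
  have rpos: "\<rho> > 0" unfolding \<rho>_def using mu M'pos by simp
  have k0: "k \<ge> 0"
  proof -
    have "\<mu> \<le> M'" unfolding M'_def by simp
    hence "\<mu>^2 \<le> M'^2" using mu by (simp add: power_mono)
    thus ?thesis unfolding k_def using M'pos by simp
  qed
  have k1: "k < 1" unfolding k_def using mu M'pos by simp
  define T where "T u = u - \<rho> *\<^sub>R P (K u - F)" for u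
  have TX: "T ` X \<subseteq> X" unfolding T_def using P sX by (auto simp: subspace_diff subspace_scale)
  have contr: "dist (T x) (T y) \<le> sqrt k * dist x y" if "x \<in> X" "y \<in> X" for x y
  proof -
    define d where "d = x - y"
    have dX: "d \<in> X" unfolding d_def using that sX by (simp add: subspace_diff)
    have e1: "P (K x - F) - P (K y - F) = P (K d)"
      using Plin[of "K x - F" "K y - F"] by (simp add: d_def Klin)
    have "T x - T y = d - \<rho> *\<^sub>R (P (K x - F) - P (K y - F))"
      unfolding T_def d_def by (simp add: algebra_simps)
    hence Tdiff: "T x - T y = d - \<rho> *\<^sub>R P (K d)" unfolding e1 .
    define n where "n = norm d ^ 2"
    define s where "s = inner (P (K d)) d"
    define w where "w = norm (P (K d)) ^ 2"
    have "inner (K d - P (K d)) d = 0" using P dX by blast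
    hence s_eq: "s = inner (K d) d" unfolding s_def by (simp add: inner_diff_left)
    have sge: "s \<ge> \<mu> * n" unfolding s_eq n_def using Kc[OF dX] .
    have "norm (P (K d)) \<le> M' * norm d" using Pn[of "K d"] Kb'[of d] by linarith
    hence "w \<le> (M' * norm d)^2" unfolding w_def by (simp add: power_mono)
    hence wle: "w \<le> M'^2 * n" unfolding n_def by (simp add: power_mult_distrib)
    have eq: "norm (d - \<rho> *\<^sub>R P (K d))^2 = n - 2 * \<rho> * s + \<rho>^2 * w"
      unfolding n_def s_def w_def
      by (simp only: power2_norm_eq_inner) (simp add: inner_diff inner_commute algebra_simps power2_eq_square)
    have "2 * \<rho> * (\<mu> * n) \<le> 2 * \<rho> * s" using sge rpos by simp
    moreover have "\<rho>^2 * w \<le> \<rho>^2 * (M'^2 * n)" using wle by (simp add: mult_left_mono)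
    ultimately have "norm (d - \<rho> *\<^sub>R P (K d))^2 \<le> n - 2 * \<rho> * (\<mu> * n) + \<rho>^2 * (M'^2 * n)"
      unfolding eq by linarith
    also have "\<dots> = k * n" unfolding k_def \<rho>_def using M'pos
      by (simp add: field_simps power2_eq_square)
    finally have sq: "norm (T x - T y)^2 \<le> k * norm d ^ 2" using Tdiff n_def by simp
    have "norm (T x - T y) = sqrt (norm (T x - T y)^2)" by simp
    also have "\<dots> \<le> sqrt (k * norm d ^ 2)" using sq by (rule real_sqrt_le_mono)
    also have "\<dots> = sqrt k * norm d" by (simp add: real_sqrt_mult)
    finally show ?thesis unfolding d_def by (simp add: dist_norm)
  qed
  have "complete X" using cX by (simp add: complete_eq_closed)
  moreover have "X \<noteq> {}" using sX subspace_0 by blast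
  ultimately obtain u where uX: "u \<in> X" and Tfix: "T u = u"
    using Banach_fix[OF _ _ _ _ TX, of "sqrt k"] contr k0 k1 by (auto simp: real_sqrt_lt_1_iff)
  have "\<rho> *\<^sub>R P (K u - F) = 0" using Tfix unfolding T_def by simp
  hence P0: "P (K u - F) = 0" using rpos by simp
  show ?thesis using uX P[of "K u - F"] unfolding P0 by auto
qed

lemma lin_op_app:
  assumes "lin_op J K T" "(x, y) \<in> T"
  shows "op_app T x = y"
proof -
  have u: "y' = y" if "(x, y') \<in> T" for y'
  proof -
    have "subspace T" using assms(1) unfolding lin_op_def by blast
    hence "(x, y') - (x, y) \<in> T" using that assms(2) by (rule subspace_diff)
    hence "(0, y' - y) \<in> T" by simp
    thus ?thesis using assms(1) unfolding lin_op_def by auto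
  qed
  show ?thesis unfolding op_app_def using assms(2) u by (rule the_equality)
qed

lemma cs_inner:
  assumes "complex_structure J"
  shows "inner x (J y) = - inner (J x) y"
proof -
  have "inner (J x) (J (J y)) = inner x (J y)" using assms unfolding complex_structure_def by blast
  moreover have "J (J y) = - y" using assms unfolding complex_structure_def by blast
  ultimately show ?thesis by simp
qed

lemma coercive_real:
  assumes "coercive J M"
  obtains \<mu> where "\<mu> > 0" "\<And>x. inner (M x) x \<ge> \<mu> * (norm x)^2"
  using assms unfolding coercive_def cinner_def by auto

theorem proposition2p15:
  fixes J0 :: "'a::{real_inner, complete_space} \<Rightarrow> 'a"
    and J1 :: "'b::{real_inner, complete_space} \<Rightarrow> 'b"
    and G :: "('a \<times> 'b) set" and D :: "('b \<times> 'a) set"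
    and a :: "'b \<Rightarrow> 'b" and m :: "'a \<Rightarrow> 'a" and q0 :: 'b
  assumes "complex_structure J0" and "complex_structure J1"
    and "lin_op J0 J1 G" and "densely_defined G" and "closed_op G"
    and "lin_op J1 J0 D" and "densely_defined D" and "closed_op D"
    and "neg_op (adjoint J0 J1 G) \<subseteq> D"
    and "cbounded J1 a" and "coercive J1 a"
    and "cbounded J0 m" and "coercive J0 m"
    and "q0 \<in> BD J0 J1 D (neg_op (adjoint J0 J1 G))"
  shows "\<exists>!u. u \<in> {v \<in> Domain G. a (op_app G v) \<in> Domain D}
           \<and> m u - op_app D (a (op_app G u)) = 0
           \<and> a (op_app G u) - q0 \<in> Domain (neg_op (adjoint J0 J1 G))"
proof -
  note J0 = assms(1) and J1 = assms(2) and GL = assms(3) and DL = assms(6)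
  have sG: "subspace G" and JG: "\<And>x g. (x, g) \<in> G \<Longrightarrow> (J0 x, J1 g) \<in> G"
    using GL unfolding lin_op_def by auto
  have cG: "closed G" using assms(5) unfolding closed_op_def .
  have sD: "subspace D" using DL unfolding lin_op_def by auto
  have adjD: "\<And>y z. (y, z) \<in> adjoint J0 J1 G \<Longrightarrow> (y, - z) \<in> D"
    using assms(9) unfolding neg_op_def by blast
  have bm: "bounded_linear m" using assms(12) unfolding cbounded_def by blast
  have ba: "bounded_linear a" using assms(10) unfolding cbounded_def by blast
  have lm: "linear m" using bm by (rule bounded_linear.linear)
  have la: "linear a" using ba by (rule bounded_linear.linear)
  obtain \<mu>m where mum: "\<mu>m > 0" "\<And>x. inner (m x) x \<ge> \<mu>m * (norm x)^2"
    using coercive_real[OF assms(13)] by blast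
  obtain \<mu>a where mua: "\<mu>a > 0" "\<And>x. inner (a x) x \<ge> \<mu>a * (norm x)^2"
    using coercive_real[OF assms(11)] by blast
  obtain Bm where Bm: "\<And>x. norm (m x) \<le> norm x * Bm" using bounded_linear.bounded[OF bm] by blast
  obtain Ba where Ba: "\<And>x. norm (a x) \<le> norm x * Ba" using bounded_linear.bounded[OF ba] by blast
  have q0D: "q0 \<in> Domain D" using assms(14) unfolding BD_def by blast
  define Dq where "Dq = op_app D q0"
  have q0Dq: "(q0, Dq) \<in> D" using q0D lin_op_app[OF DL] unfolding Dq_def by force
  define K where "K p = (m (fst p), a (snd p))" for p :: "'a \<times> 'b"
  define \<mu> where "\<mu> = min \<mu>m \<mu>a"
  have Klin: "K (p - q) = K p - K q" for p q
    unfolding K_def by (simp add: linear_diff[OF lm] linear_diff[OF la])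
  have Kb: "norm (K p) \<le> (abs Bm + abs Ba) * norm p" for p
  proof -
    have "norm (K p) \<le> norm (m (fst p)) + norm (a (snd p))" unfolding K_def by (rule norm_Pair_le)
    also have "\<dots> \<le> norm (fst p) * abs Bm + norm (snd p) * abs Ba"
      using Bm[of "fst p"] Ba[of "snd p"]
      by (smt (verit) abs_ge_self mult_left_mono norm_ge_zero)
    also have "\<dots> \<le> norm p * abs Bm + norm p * abs Ba"
      using norm_fst_le[of "fst p" "snd p"] norm_snd_le[of "snd p" "fst p"]
      by (simp add: add_mono mult_right_mono)
    finally show ?thesis by (simp add: algebra_simps)
  qed
  have Kc: "inner (K p) p \<ge> \<mu> * norm p ^ 2" for p
  proof -
    obtain x y where p: "p = (x, y)" by fastforce
    have "norm p ^ 2 = norm x ^ 2 + norm y ^ 2" unfolding p norm_Pair by simp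
    moreover have "\<mu> * norm x ^ 2 \<le> \<mu>m * norm x ^ 2" unfolding \<mu>_def by (simp add: mult_right_mono)
    moreover have "\<mu> * norm y ^ 2 \<le> \<mu>a * norm y ^ 2" unfolding \<mu>_def by (simp add: mult_right_mono)
    moreover have "inner (K p) p = inner (m x) x + inner (a y) y" unfolding p K_def by simp
    ultimately show ?thesis using mum(2)[of x] mua(2)[of y] by (simp add: algebra_simps)
  qed
  have mupos: "\<mu> > 0" unfolding \<mu>_def using mum mua by simp
  obtain p where pG: "p \<in> G" and pw: "\<forall>v\<in>G. inner (K p - (Dq, q0)) v = 0"
    using lax_milgram[OF sG cG Klin Kb Kc mupos] by blast
  obtain xu gu where p: "p = (xu, gu)" by fastforce
  have xuG: "(xu, gu) \<in> G" using pG p by simp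
  have weak: "inner (m xu - Dq) x + inner (a gu - q0) g = 0" if "(x, g) \<in> G" for x g
  proof -
    have "inner (K p - (Dq, q0)) (x, g) = 0" using pw that by blast
    thus ?thesis unfolding p K_def by simp
  qed
  define w where "w = a gu - q0"
  define z where "z = Dq - m xu"
  have R: "inner g w = inner x z" if "(x, g) \<in> G" for x g
    using weak[OF that] unfolding w_def z_def
    by (simp add: inner_diff_left inner_diff_right inner_commute algebra_simps)
  have adj: "(w, z) \<in> adjoint J0 J1 G"
    unfolding adjoint_def
  proof (clarsimp)
    fix x g assume xg: "(x, g) \<in> G"
    have re: "inner g w = inner x z" using R[OF xg] .
    have im: "inner g (J1 w) = inner x (J0 z)"
      using R[OF JG[OF xg]] cs_inner[OF J1, of g w] cs_inner[OF J0, of x z] by simp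
    show "cinner J1 g w = cinner J0 x z" unfolding cinner_def using re im by simp
  qed
  have wD: "(w, - z) \<in> D" using adjD[OF adj] .
  have "(q0, Dq) + (w, - z) \<in> D" using subspace_add[OF sD q0Dq wD] .
  hence agD: "(a gu, m xu) \<in> D" unfolding w_def z_def by simp
  have opG: "op_app G xu = gu" using lin_op_app[OF GL xuG] .
  have opD: "op_app D (a gu) = m xu" using lin_op_app[OF DL agD] .
  have negdom: "w \<in> Domain (neg_op (adjoint J0 J1 G))" using adj unfolding neg_op_def by blast
  show ?thesis
  proof (rule ex1I[where a=xu])
    show "xu \<in> {v \<in> Domain G. a (op_app G v) \<in> Domain D}
           \<and> m xu - op_app D (a (op_app G xu)) = 0
           \<and> a (op_app G xu) - q0 \<in> Domain (neg_op (adjoint J0 J1 G))"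
      using xuG agD opG opD negdom unfolding w_def by auto
  next
    fix u' assume H: "u' \<in> {v \<in> Domain G. a (op_app G v) \<in> Domain D}
           \<and> m u' - op_app D (a (op_app G u')) = 0
           \<and> a (op_app G u') - q0 \<in> Domain (neg_op (adjoint J0 J1 G))"
    then obtain g' where u'G: "(u', g') \<in> G" by blast
    have opG': "op_app G u' = g'" using lin_op_app[OF GL u'G] .
    obtain y where "(a g' - q0, y) \<in> neg_op (adjoint J0 J1 G)" using H opG' by blast
    then obtain z' where adj': "(a g' - q0, z') \<in> adjoint J0 J1 G" unfolding neg_op_def by blast
    have "(q0, Dq) + (a g' - q0, - z') \<in> D" using subspace_add[OF sD q0Dq adjD[OF adj']] .
    hence "(a g', Dq - z') \<in> D" by simp
    hence "op_app D (a g') = Dq - z'" by (rule lin_op_app[OF DL])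
    hence z'eq: "z' = Dq - m u'" using H opG' by simp
    have R': "inner g (a g' - q0) = inner x (Dq - m u')" if "(x, g) \<in> G" for x g
    proof -
      have "cinner J1 g (a g' - q0) = cinner J0 x z'" using adj' that unfolding adjoint_def by blast
      hence "Re (cinner J1 g (a g' - q0)) = Re (cinner J0 x z')" by simp
      thus ?thesis unfolding cinner_def z'eq by simp
    qed
    define d where "d = u' - xu"
    define e where "e = g' - gu"
    have deG: "(d, e) \<in> G" using u'G xuG sG unfolding d_def e_def
      by (metis diff_Pair subspace_diff)
    have "inner e (a g' - q0) - inner e (a gu - q0) = inner d (Dq - m u') - inner d (Dq - m xu)"
      using R'[OF deG] R[OF deG] unfolding w_def z_def by simp
    hence "inner e (a e) = - inner d (m d)"
      unfolding d_def e_def by (simp add: linear_diff[OF lm] linear_diff[OF la] inner_diff_left inner_diff_right)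
    hence sum0: "inner (m d) d + inner (a e) e = 0" by (simp add: inner_commute)
    have "\<mu>m * (norm d)^2 \<le> 0"
      using sum0 mum(2)[of d] mua(2)[of e] mua(1) by (smt (verit) mult_nonneg_nonneg zero_le_power2)
    hence "norm d = 0" using mum(1) by (simp add: mult_le_0_iff)
    thus "u' = xu" unfolding d_def by simp
  qed
qed

end
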